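(* The $\mathcal K(2)$-module $\operatorname{gr}\mathcal D_{\lambda\mu}=\bigoplus_{i\ge0}\operatorname{gr}^{i/2}\mathcal D_{\lambda\mu}$ depends only on $\mu-\lambda$: if $\mu-\lambda=\mu'-\lambda'$ then $\operatorname{gr}\mathcal D_{\lambda\mu}\cong\operatorname{gr}\mathcal D_{\lambda'\mu'}$ as $\mathcal K(2)$-modules.
   Context: $C^\infty(S^{1|2})$ consists of $f=f_0(x)+\xi_1f_1(x)+\xi_2f_2(x)+\xi_1\xi_2f_{12}(x)$ with smooth complex-valued coefficients on the circle and odd Grassmann variables $\xi_1,\xi_2$; parity $p(x)=0,p(\xi_i)=1$; $f'=\partial_xf$. $\overline D_i=\partial_{\xi_i}-\xi_i\partial_x$. For homogeneous $f$, $X_f=f\partial_x-(-1)^{p(f)}\tfrac12(\overline D_1(f)\overline D_1+\overline D_2(f)\overline D_2)$; $\mathcal K(2)$ is the Lie superalgebra of all such $X_f$. $\mathcal F_\lambda$ is $C^\infty(S^{1|2})$ with action $L^\lambda_{X_f}=X_f+\lambda f'$. $\mathcal D_{\lambda\mu}$: linear differential operators $\mathcal F_\lambda\to\mathcal F_\mu$ with action $\mathcal L_{X_f}(A)=L^\mu_{X_f}\circ A-(-1)^{p(f)p(A)}A\circ L^\lambda_{X_f}$; each is a finite sum $\sum a_{\ell,m,n}\partial_x^\ell\overline D_1^m\overline D_2^n$, $m,n\in\{0,1\}$. For $k\in\frac12\mathbb Z_{\ge0}$, $\mathcal D^k_{\lambda\mu}$ consists of such sums with $\ell+\frac m2+\frac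 n2\le k$; it is $\mathcal K(2)$-stable, and $\operatorname{gr}^k\mathcal D_{\lambda\mu}=\mathcal D^k_{\lambda\mu}/\mathcal D^{k-1/2}_{\lambda\mu}$ (with $\mathcal D^{-1/2}=0$) carries the induced action. *)

theory Defs
  imports "HOL-Analysis.Analysis" "HOL-Library.Function_Algebras"
begin

text \<open>Superfunctions on S^(1|2): F m n is the coefficient of xi1^m xi2^n,
  so f = F False False + xi1 F True False + xi2 F False True + xi1 xi2 F True True.
  The circle is R / 2 pi Z; coefficients are smooth 2pi-periodic complex functions.\<close>

type_synonym sfun = "bool \<Rightarrow> bool \<Rightarrow> real \<Rightarrow> complex"
type_synonym sop = "sfun \<Rightarrow> sfun"

definition vderiv :: "(real \<Rightarrow> complex) \<Rightarrow> real \<Rightarrow> complex" where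
  "vderiv u = (\<lambda>x. vector_derivative u (at x))"

definition smooth_circ :: "(real \<Rightarrow> complex) \<Rightarrow> bool" where
  "smooth_circ u \<longleftrightarrow> (\<forall>k x. (vderiv ^^ k) u differentiable (at x)) \<and> (\<forall>x. u (x + 2 * pi) = u x)"

definition Cinf :: "sfun set" where
  "Cinf = {F. \<forall>m n. smooth_circ (F m n)}"

definition sscale :: "complex \<Rightarrow> sfun \<Rightarrow> sfun" where
  "sscale c F = (\<lambda>m n x. c * F m n x)"

text \<open>Grassmann product (coefficients commute, xi1 xi2 = - xi2 xi1).\<close>
definition smul :: "sfun \<Rightarrow> sfun \<Rightarrow> sfun" where
  "smul F G = (\<lambda>m n x.
     if \<not> m \<and> \<not> n then F False False x * G False False x
     else if m \<and> \<not> n then F False False x * G True False x + F True False x * G False False x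
     else if \<not> m \<and> n then F False False x * G False True x + F False True x * G False False x
     else F False False x * G True True x + F True True x * G False False x
          + F True False x * G False True x - F False True x * G True False x)"

definition dx :: "sfun \<Rightarrow> sfun" where
  "dx F = (\<lambda>m n. vderiv (F m n))"

definition xi1 :: sfun where "xi1 = (\<lambda>m n x. if m \<and> \<not> n then 1 else 0)"
definition xi2 :: sfun where "xi2 = (\<lambda>m n x. if \<not> m \<and> n then 1 else 0)"

text \<open>Left derivatives in the odd variables.\<close>
definition dxi1 :: "sfun \<Rightarrow> sfun" where
  "dxi1 F = (\<lambda>m n. if m then 0 else F True n)"
definition dxi2 :: "sfun \<Rightarrow> sfun" where
  "dxi2 F = (\<lambda>m n. if n then 0 else if m then - F True True else F False True)"

definition Dbar1 :: "sfun \<Rightarrow> sfun" where "Dbar1 F = dxi1 F - smul xi1 (dx F)"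
definition Dbar2 :: "sfun \<Rightarrow> sfun" where "Dbar2 F = dxi2 F - smul xi2 (dx F)"

definition evp :: "sfun \<Rightarrow> sfun" where "evp F = (\<lambda>m n. if m = n then F m n else 0)"
definition odp :: "sfun \<Rightarrow> sfun" where "odp F = (\<lambda>m n. if m = n then 0 else F m n)"

definition psign :: "bool \<Rightarrow> complex" where "psign p = (if p then -1 else 1)"

text \<open>X_f for f homogeneous of parity p, and L^lambda_{X_f} = X_f + lambda f'.\<close>
definition Xh :: "sfun \<Rightarrow> bool \<Rightarrow> sfun \<Rightarrow> sfun" where
  "Xh f p g = smul f (dx g)
     - sscale (psign p / 2) (smul (Dbar1 f) (Dbar1 g) + smul (Dbar2 f) (Dbar2 g))"

definition Lh :: "complex \<Rightarrow> sfun \<Rightarrow> bool \<Rightarrow> sfun \<Rightarrow> sfun" where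
  "Lh lam f p g = Xh f p g + sscale lam (smul (dx f) g)"

text \<open>Operators F_lambda -> F_mu are maps on C^infty(S^(1|2)), made canonical by
  being zero outside C^infty.\<close>
definition restr :: "sop \<Rightarrow> sop" where
  "restr A = (\<lambda>g. if g \<in> Cinf then A g else 0)"

definition op_ev :: "sop \<Rightarrow> sop" where
  "op_ev A = restr (\<lambda>g. evp (A (evp g)) + odp (A (odp g)))"
definition op_od :: "sop \<Rightarrow> sop" where
  "op_od A = restr (\<lambda>g. odp (A (evp g)) + evp (A (odp g)))"

definition Lact_h :: "complex \<Rightarrow> complex \<Rightarrow> sfun \<Rightarrow> bool \<Rightarrow> sop \<Rightarrow> bool \<Rightarrow> sop" where
  "Lact_h lam mu f p A q =
     restr (\<lambda>g. Lh mu f p (A g) - sscale (psign (p \<and> q)) (A (Lh lam f p g)))"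

definition Lact :: "complex \<Rightarrow> complex \<Rightarrow> sfun \<Rightarrow> sop \<Rightarrow> sop" where
  "Lact lam mu f A =
       Lact_h lam mu (evp f) False (op_ev A) False + Lact_h lam mu (evp f) False (op_od A) True
     + Lact_h lam mu (odp f) True (op_ev A) False + Lact_h lam mu (odp f) True (op_od A) True"

definition monop :: "nat \<Rightarrow> bool \<Rightarrow> bool \<Rightarrow> sfun \<Rightarrow> sfun" where
  "monop l m n g = (dx ^^ l) ((if m then Dbar1 else id) ((if n then Dbar2 else id) g))"

text \<open>Dord j = D^{j/2}: sums of a_{l,m,n} dx^l Dbar1^m Dbar2^n with l + m/2 + n/2 <= j/2.\<close>
definition Dord :: "nat \<Rightarrow> sop set" where
  "Dord j = {A. \<exists>a. (\<forall>l m n. a l m n \<in> Cinf) \<and>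
      A = restr (\<lambda>g. \<Sum>(l, m, n) \<in> {(l, m, n). 2 * l + of_bool m + of_bool n \<le> j}.
                        smul (a l m n) (monop l m n g))}"

text \<open>Dlow j = D^{j/2 - 1/2}, with D^{-1/2} = 0.\<close>
definition Dlow :: "nat \<Rightarrow> sop set" where
  "Dlow j = (if j = 0 then {0} else Dord (j - 1))"

text \<open>gr D = direct sum over j of D^{j/2} / D^{j/2-1/2}, represented by families of
  representatives Q j in D^{j/2}, almost all in D^{j/2-1/2}, modulo grel.\<close>
definition GR :: "(nat \<Rightarrow> sop) set" where
  "GR = {Q. (\<forall>j. Q j \<in> Dord j) \<and> finite {j. Q j \<notin> Dlow j}}"

definition grel :: "(nat \<Rightarrow> sop) \<Rightarrow> (nat \<Rightarrow> sop) \<Rightarrow> bool" where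
  "grel Q R \<longleftrightarrow> (\<forall>j. Q j - R j \<in> Dlow j)"

definition gscale :: "complex \<Rightarrow> (nat \<Rightarrow> sop) \<Rightarrow> nat \<Rightarrow> sop" where
  "gscale c Q = (\<lambda>j g. sscale c (Q j g))"

definition gev :: "(nat \<Rightarrow> sop) \<Rightarrow> nat \<Rightarrow> sop" where
  "gev Q = (\<lambda>j. op_ev (Q j))"

definition gr_act :: "complex \<Rightarrow> complex \<Rightarrow> sfun \<Rightarrow> (nat \<Rightarrow> sop) \<Rightarrow> nat \<Rightarrow> sop" where
  "gr_act lam mu f Q = (\<lambda>j. Lact lam mu f (Q j))"

text \<open>An (even, C-linear) isomorphism of K(2)-modules gr D_{lam mu} -> gr D_{lam' mu'},
  expressed on representatives.\<close>
definition gr_iso :: "complex \<Rightarrow> complex \<Rightarrow> complex \<Rightarrow> complex \<Rightarrow> bool" where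
  "gr_iso lam mu lam' mu' \<longleftrightarrow> (\<exists>\<Phi>.
      (\<forall>Q\<in>GR. \<Phi> Q \<in> GR)
    \<and> (\<forall>Q\<in>GR. \<forall>R\<in>GR. grel Q R \<longleftrightarrow> grel (\<Phi> Q) (\<Phi> R))
    \<and> (\<forall>R\<in>GR. \<exists>Q\<in>GR. grel (\<Phi> Q) R)
    \<and> (\<forall>Q\<in>GR. \<forall>R\<in>GR. grel (\<Phi> (Q + R)) (\<Phi> Q + \<Phi> R))
    \<and> (\<forall>c. \<forall>Q\<in>GR. grel (\<Phi> (gscale c Q)) (gscale c (\<Phi> Q)))
    \<and> (\<forall>Q\<in>GR. grel (\<Phi> (gev Q)) (gev (\<Phi> Q)))
    \<and> (\<forall>f\<in>Cinf. \<forall>Q\<in>GR. grel (\<Phi> (gr_act lam mu f Q)) (gr_act lam' mu' f (\<Phi> Q))))"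

end

theory Submission
  imports Defs
begin


definition sm :: "(real \<Rightarrow> complex) \<Rightarrow> bool" where
  "sm u \<longleftrightarrow> (\<forall>k x. (vderiv ^^ k) u differentiable (at x))"

lemma funpow_vd: "(vderiv ^^ Suc k) u = (vderiv ^^ k) (vderiv u)"
  by (simp add: funpow_swap1)

lemma sm_vderiv: "sm u \<Longrightarrow> sm (vderiv u)"
  unfolding sm_def by (metis funpow_vd)

lemma sm_D: "sm u \<Longrightarrow> u differentiable (at x)"
  unfolding sm_def by (metis funpow_0)

lemma vderiv_add: "(\<And>x. u differentiable (at x)) \<Longrightarrow> (\<And>x. v differentiable (at x)) \<Longrightarrow>
   vderiv (\<lambda>x. u x + v x) = (\<lambda>x. vderiv u x + vderiv v x)"
  unfolding vderiv_def by (rule ext) simp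

lemma vderiv_diff: "(\<And>x. u differentiable (at x)) \<Longrightarrow> (\<And>x. v differentiable (at x)) \<Longrightarrow>
   vderiv (\<lambda>x. u x - v x) = (\<lambda>x. vderiv u x - vderiv v x)"
  unfolding vderiv_def by (rule ext) simp

lemma vderiv_mult: "(\<And>x. u differentiable (at x)) \<Longrightarrow> (\<And>x. v differentiable (at x)) \<Longrightarrow>
   vderiv (\<lambda>x. u x * v x) = (\<lambda>x. vderiv u x * v x + u x * vderiv v x)"
  unfolding vderiv_def by (rule ext) (simp add: add.commute)

lemma vderiv_const: "vderiv (\<lambda>x. c) = (\<lambda>x. 0)"
  unfolding vderiv_def by (rule ext) (simp add: vector_derivative_at)

definition Qd :: "nat \<Rightarrow> (real \<Rightarrow> complex) \<Rightarrow> bool" where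
  "Qd k w \<longleftrightarrow> (\<forall>j\<le>k. \<forall>x. (vderiv ^^ j) w differentiable (at x))"

lemma Q_sm: "sm w \<longleftrightarrow> (\<forall>k. Qd k w)"
  unfolding sm_def Qd_def by blast

lemma Q_0: "Qd k w \<Longrightarrow> w differentiable (at x)"
  unfolding Qd_def by (metis funpow_0 le0)

lemma Q_vd: "Qd (Suc k) w \<Longrightarrow> Qd k (vderiv w)"
  unfolding Qd_def by (metis Suc_le_mono funpow_vd)

lemma Q_Suc: assumes H1: "\<And>x. w differentiable (at x)" and H2: "Qd k (vderiv w)" shows "Qd (Suc k) w"
  unfolding Qd_def
proof (intro allI impI)
  fix j x' assume j: "j \<le> Suc k"
  show "(vderiv ^^ j) w differentiable (at x')"
  proof (cases j)
    case 0 then show ?thesis using H1 by simp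
  next
    case (Suc j')
    then have "j' \<le> k" using j by simp
    then show ?thesis unfolding Suc funpow_vd using H2 unfolding Qd_def by blast
  qed
qed

lemma Q_add: "Qd k A \<Longrightarrow> Qd k B \<Longrightarrow> Qd k (\<lambda>x. A x + B x)"
proof (induction k arbitrary: A B)
  case 0 then show ?case unfolding Qd_def by (auto intro!: differentiable_add dest: Q_0)
next
  case (Suc k)
  have dA: "\<And>x. A differentiable (at x)" and dB: "\<And>x. B differentiable (at x)"
    using Suc.prems by (auto intro: Q_0)
  have "Qd k (\<lambda>x. vderiv A x + vderiv B x)" using Suc.IH Suc.prems Q_vd by blast
  then have "Qd k (vderiv (\<lambda>x. A x + B x))" using dA dB by (simp add: vderiv_add)
  then show ?case using dA dB by (intro Q_Suc) auto
qed

lemma Q_diff: "Qd k A \<Longrightarrow> Qd k B \<Longrightarrow> Qd k (\<lambda>x. A x - B x)"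
proof (induction k arbitrary: A B)
  case 0 then show ?case unfolding Qd_def by (auto intro!: differentiable_diff dest: Q_0)
next
  case (Suc k)
  have dA: "\<And>x. A differentiable (at x)" and dB: "\<And>x. B differentiable (at x)"
    using Suc.prems by (auto intro: Q_0)
  have "Qd k (\<lambda>x. vderiv A x - vderiv B x)" using Suc.IH Suc.prems Q_vd by blast
  then have "Qd k (vderiv (\<lambda>x. A x - B x))" using dA dB by (simp add: vderiv_diff)
  then show ?case using dA dB by (intro Q_Suc) auto
qed

lemma Q_mult: "sm u \<Longrightarrow> sm v \<Longrightarrow> Qd k (\<lambda>x. u x * v x)"
proof (induction k arbitrary: u v)
  case 0 then show ?case unfolding Qd_def by (simp add: sm_D)
next
  case (Suc k)
  have du: "\<And>x. u differentiable (at x)" and dv: "\<And>x. v differentiable (at x)"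
    using Suc.prems by (auto intro: sm_D)
  have "Qd k (\<lambda>x. vderiv u x * v x + u x * vderiv v x)"
    using Suc.IH Suc.prems sm_vderiv by (intro Q_add) blast+
  then have "Qd k (vderiv (\<lambda>x. u x * v x))" using du dv by (simp add: vderiv_mult)
  then show ?case using du dv by (intro Q_Suc) auto
qed

lemma sm_add: assumes "sm u" "sm v" shows "sm (\<lambda>x. u x + v x)"
  using assms unfolding Q_sm by (blast intro: Q_add)
lemma sm_diff: assumes "sm u" "sm v" shows "sm (\<lambda>x. u x - v x)"
  using assms unfolding Q_sm by (blast intro: Q_diff)
lemma sm_mult: assumes "sm u" "sm v" shows "sm (\<lambda>x. u x * v x)"
  using assms unfolding Q_sm[of "\<lambda>x. u x * v x"] by (blast intro: Q_mult)

lemma sm_const: "sm (\<lambda>x. c)"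
proof -
  have "(vderiv ^^ k) (\<lambda>x. c) = (\<lambda>x. if k = 0 then c else 0)" for k
    by (induction k) (auto simp: vderiv_const)
  then show ?thesis unfolding sm_def by simp
qed

definition per :: "(real \<Rightarrow> complex) \<Rightarrow> bool" where
  "per u \<longleftrightarrow> (\<forall>x. u (x + 2 * pi) = u x)"

lemma per_vderiv: assumes "per u" "\<And>x. u differentiable (at x)" shows "per (vderiv u)"
  unfolding per_def
proof
  fix x
  have c: "u \<circ> (\<lambda>y. y + 2*pi) = u" using assms(1) unfolding per_def by auto
  have d: "(\<lambda>y. y + 2*pi) differentiable (at x)" by (intro derivative_intros)
  have e: "vector_derivative (\<lambda>y::real. y + 2*pi) (at x) = 1"
    by (rule vector_derivative_at) (auto intro!: derivative_eq_intros)
  have "vector_derivative (u \<circ> (\<lambda>y. y + 2*pi)) (at x) = vector_derivative u (at (x + 2*pi))"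
    using vector_derivative_chain_at[OF d assms(2)] e by simp
  then show "vderiv u (x + 2*pi) = vderiv u x" unfolding vderiv_def c by simp
qed

lemma smooth_circ_iff: "smooth_circ u \<longleftrightarrow> sm u \<and> per u"
  unfolding smooth_circ_def sm_def per_def by blast


definition ok :: "(real \<Rightarrow> complex) \<Rightarrow> bool" where "ok u \<longleftrightarrow> sm u \<and> per u"

lemma ok_add: "ok u \<Longrightarrow> ok v \<Longrightarrow> ok (\<lambda>x. u x + v x)"
  unfolding ok_def per_def by (auto intro: sm_add)
lemma ok_diff: "ok u \<Longrightarrow> ok v \<Longrightarrow> ok (\<lambda>x. u x - v x)"
  unfolding ok_def per_def by (auto intro: sm_diff)
lemma ok_mult: "ok u \<Longrightarrow> ok v \<Longrightarrow> ok (\<lambda>x. u x * v x)"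
  unfolding ok_def per_def by (auto intro: sm_mult)
lemma ok_const: "ok (\<lambda>x. c)"
  unfolding ok_def per_def by (auto intro: sm_const)
lemma ok_vderiv: "ok u \<Longrightarrow> ok (vderiv u)"
  unfolding ok_def by (auto intro: sm_vderiv per_vderiv sm_D)
lemma ok_eta: "ok u \<Longrightarrow> ok (\<lambda>x. u x)" by simp
lemma ok_cmult: "ok u \<Longrightarrow> ok (\<lambda>x. c * u x)"
  using ok_mult[OF ok_const] by blast
lemma ok_neg: "ok u \<Longrightarrow> ok (\<lambda>x. - u x)"
  using ok_diff[OF ok_const, of u 0] by simp
lemma ok_zero: "ok (\<lambda>x. 0)" by (rule ok_const)
lemma ok_zero': "ok 0" using ok_const[of 0] by (simp add: zero_fun_def)
lemma ok_dfb: "ok u \<Longrightarrow> u differentiable (at x)"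
  unfolding ok_def by (auto intro: sm_D)

lemma Cinf_ok: "F \<in> Cinf \<longleftrightarrow> (\<forall>m n. ok (F m n))"
  unfolding Cinf_def ok_def smooth_circ_iff by blast

lemma CinfI: "ok (F False False) \<Longrightarrow> ok (F True False) \<Longrightarrow> ok (F False True) \<Longrightarrow> ok (F True True) \<Longrightarrow> F \<in> Cinf"
  unfolding Cinf_ok by (metis (full_types))

lemma CinfD: "F \<in> Cinf \<Longrightarrow> ok (F m n)"
  unfolding Cinf_ok by blast

lemma CinfD': "F \<in> Cinf \<Longrightarrow> ok (\<lambda>x. F m n x)"
  unfolding Cinf_ok by simp

lemma sfun_eqI: "(\<And>x. F False False x = G False False x) \<Longrightarrow> (\<And>x. F True False x = G True False x) \<Longrightarrow>
   (\<And>x. F False True x = G False True x) \<Longrightarrow> (\<And>x. F True True x = G True True x) \<Longrightarrow> F = G"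
  apply (rule ext)+
  subgoal for m n x by (cases m; cases n; simp)
  done

lemmas okI = ok_add ok_diff ok_mult ok_const ok_vderiv ok_cmult ok_neg CinfD' CinfD

lemma Cinf_add: "F \<in> Cinf \<Longrightarrow> G \<in> Cinf \<Longrightarrow> F + G \<in> Cinf"
  by (rule CinfI) (simp_all add: plus_fun_def okI)
lemma Cinf_diff: "F \<in> Cinf \<Longrightarrow> G \<in> Cinf \<Longrightarrow> F - G \<in> Cinf"
  by (rule CinfI) (simp_all add: fun_diff_def okI)
lemma Cinf_zero: "0 \<in> Cinf"
  by (rule CinfI) (simp_all add: zero_fun_def okI)
lemma Cinf_sscale: "F \<in> Cinf \<Longrightarrow> sscale c F \<in> Cinf"
  by (rule CinfI) (simp_all add: sscale_def okI)
lemma Cinf_smul: "F \<in> Cinf \<Longrightarrow> G \<in> Cinf \<Longrightarrow> smul F G \<in> Cinf"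
  by (rule CinfI) (simp_all add: smul_def okI)
lemma Cinf_dx: "F \<in> Cinf \<Longrightarrow> dx F \<in> Cinf"
  by (rule CinfI) (simp_all add: dx_def okI)
lemma Cinf_xi1: "xi1 \<in> Cinf"
  by (rule CinfI) (simp_all add: xi1_def okI)
lemma Cinf_xi2: "xi2 \<in> Cinf"
  by (rule CinfI) (simp_all add: xi2_def okI)
lemma Cinf_dxi1: "F \<in> Cinf \<Longrightarrow> dxi1 F \<in> Cinf"
  by (rule CinfI) (simp_all add: dxi1_def okI ok_zero')
lemma Cinf_dxi2: "F \<in> Cinf \<Longrightarrow> dxi2 F \<in> Cinf"
  by (rule CinfI) (simp_all add: dxi2_def okI ok_zero' fun_Compl_def)
lemma Cinf_Dbar1: "F \<in> Cinf \<Longrightarrow> Dbar1 F \<in> Cinf"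
  unfolding Dbar1_def by (intro Cinf_diff Cinf_dxi1 Cinf_smul Cinf_xi1 Cinf_dx)
lemma Cinf_Dbar2: "F \<in> Cinf \<Longrightarrow> Dbar2 F \<in> Cinf"
  unfolding Dbar2_def by (intro Cinf_diff Cinf_dxi2 Cinf_smul Cinf_xi2 Cinf_dx)
lemma Cinf_evp: "F \<in> Cinf \<Longrightarrow> evp F \<in> Cinf"
  by (rule CinfI) (simp_all add: evp_def okI ok_zero')
lemma Cinf_odp: "F \<in> Cinf \<Longrightarrow> odp F \<in> Cinf"
  by (rule CinfI) (simp_all add: odp_def okI ok_zero')
lemma Cinf_dxpow: "F \<in> Cinf \<Longrightarrow> (dx ^^ l) F \<in> Cinf"
  by (induction l) (auto intro: Cinf_dx)
lemma Cinf_monop: "F \<in> Cinf \<Longrightarrow> monop l m n F \<in> Cinf"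
  unfolding monop_def by (auto intro!: Cinf_dxpow Cinf_Dbar1 Cinf_Dbar2)
lemma Cinf_Xh: "f \<in> Cinf \<Longrightarrow> g \<in> Cinf \<Longrightarrow> Xh f p g \<in> Cinf"
  unfolding Xh_def by (intro Cinf_diff Cinf_smul Cinf_dx Cinf_sscale Cinf_add Cinf_Dbar1 Cinf_Dbar2)
lemma Cinf_sum: "finite S \<Longrightarrow> (\<And>i. i \<in> S \<Longrightarrow> F i \<in> Cinf) \<Longrightarrow> (\<Sum>i\<in>S. F i) \<in> Cinf"
  by (induction S rule: finite_induct) (auto intro: Cinf_add Cinf_zero)

lemma smul_add_left: "smul (F + G) H = smul F H + smul G H"
  by (rule sfun_eqI) (simp_all add: smul_def algebra_simps)
lemma smul_add_right: "smul H (F + G) = smul H F + smul H G"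
  by (rule sfun_eqI) (simp_all add: smul_def algebra_simps)
lemma smul_diff_left: "smul (F - G) H = smul F H - smul G H"
  by (rule sfun_eqI) (simp_all add: smul_def algebra_simps)
lemma smul_diff_right: "smul H (F - G) = smul H F - smul H G"
  by (rule sfun_eqI) (simp_all add: smul_def algebra_simps)
lemma smul_zero_left[simp]: "smul 0 H = 0"
  by (rule sfun_eqI) (simp_all add: smul_def)
lemma smul_zero_right[simp]: "smul H 0 = 0"
  by (rule sfun_eqI) (simp_all add: smul_def)
lemma smul_sscale_left: "smul (sscale c F) G = sscale c (smul F G)"
  by (rule sfun_eqI) (simp_all add: smul_def sscale_def algebra_simps)
lemma smul_sscale_right: "smul F (sscale c G) = sscale c (smul F G)"
  by (rule sfun_eqI) (simp_all add: smul_def sscale_def algebra_simps)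
lemma smul_assoc: "smul (smul F G) H = smul F (smul G H)"
  by (rule sfun_eqI) (simp_all add: smul_def algebra_simps)
lemma sscale_add: "sscale c (F + G) = sscale c F + sscale c G"
  by (rule sfun_eqI) (simp_all add: sscale_def algebra_simps)
lemma sscale_diff: "sscale c (F - G) = sscale c F - sscale c G"
  by (rule sfun_eqI) (simp_all add: sscale_def algebra_simps)
lemma sscale_sscale: "sscale c (sscale d F) = sscale (c * d) F"
  by (rule sfun_eqI) (simp_all add: sscale_def algebra_simps)
lemma sscale_one[simp]: "sscale 1 F = F"
  by (rule sfun_eqI) (simp_all add: sscale_def)
lemma sscale_zero[simp]: "sscale c 0 = 0"
  by (rule sfun_eqI) (simp_all add: sscale_def)
lemma sscale_zero'[simp]: "sscale 0 F = 0"
  by (rule sfun_eqI) (simp_all add: sscale_def)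

lemma sum_additive:
  fixes T :: "sfun \<Rightarrow> sfun"
  assumes add: "\<And>x y. T (x + y) = T x + T y" and z: "T 0 = 0"
  shows "T (\<Sum>i\<in>S. F i) = (\<Sum>i\<in>S. T (F i))"
proof (induction S rule: infinite_finite_induct)
  case (infinite A) then show ?case by (metis sum.infinite z)
next
  case empty then show ?case by (simp only: sum.empty z)
next
  case (insert x S') then show ?case by (simp only: sum.insert[OF insert(1,2)] add insert(3))
qed

lemma smul_sum_right: "smul H (\<Sum>i\<in>S. F i) = (\<Sum>i\<in>S. smul H (F i))"
  by (rule sum_additive[where T="smul H"]) (simp_all only: smul_add_right smul_zero_right)
lemma smul_sum_left: "smul (\<Sum>i\<in>S. F i) H = (\<Sum>i\<in>S. smul (F i) H)"
  by (rule sum_additive[where T="\<lambda>x. smul x H"]) (simp_all only: smul_add_left smul_zero_left)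
lemma sscale_sum: "sscale c (\<Sum>i\<in>S. F i) = (\<Sum>i\<in>S. sscale c (F i))"
  by (rule sum_additive[where T="sscale c"]) (simp_all only: sscale_add sscale_zero)

definition hom :: "bool \<Rightarrow> sfun \<Rightarrow> bool" where
  "hom p F \<longleftrightarrow> (\<forall>m n. (m \<noteq> n) \<noteq> p \<longrightarrow> F m n = 0)"

lemma hom_False: "hom False F \<longleftrightarrow> F True False = 0 \<and> F False True = 0"
  unfolding hom_def by (metis (full_types))
lemma hom_True: "hom True F \<longleftrightarrow> F False False = 0 \<and> F True True = 0"
  unfolding hom_def by (metis (full_types))

lemma homE: "hom p F \<Longrightarrow> (p \<Longrightarrow> F False False = 0 \<Longrightarrow> F True True = 0 \<Longrightarrow> P) \<Longrightarrow>
   (\<not> p \<Longrightarrow> F True False = 0 \<Longrightarrow> F False True = 0 \<Longrightarrow> P) \<Longrightarrow> P"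
  by (cases p) (auto simp: hom_False hom_True)

lemma fun0_apply: "F = (0::real\<Rightarrow>complex) \<Longrightarrow> F x = 0" by simp

lemma supercomm: assumes "hom p h" "hom r b"
  shows "smul h (smul b X) = sscale (psign (p \<and> r)) (smul b (smul h X))"
  using assms
  apply (elim homE)
  apply (rule sfun_eqI; simp add: smul_def sscale_def psign_def algebra_simps)+
  done

lemma hom_evp: "hom False (evp F)" unfolding hom_False evp_def by simp
lemma hom_odp: "hom True (odp F)" unfolding hom_True odp_def by simp
lemma hom_smul: "hom p F \<Longrightarrow> hom q G \<Longrightarrow> hom (p \<noteq> q) (smul F G)"
  apply (elim homE)
  apply (simp_all add: hom_False hom_True)
  apply (simp_all add: smul_def fun_eq_iff)
  done
lemma hom_sscale: "hom p F \<Longrightarrow> hom p (sscale c F)"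
  unfolding hom_def sscale_def by (auto simp: fun_eq_iff)
lemma hom_add: "hom p F \<Longrightarrow> hom p G \<Longrightarrow> hom p (F + G)"
  unfolding hom_def by auto
lemma hom_diff: "hom p F \<Longrightarrow> hom p G \<Longrightarrow> hom p (F - G)"
  unfolding hom_def by auto
lemma vderiv_zero: "vderiv 0 = 0"
  using vderiv_const[of 0] by (simp add: zero_fun_def)
lemma hom_dx: "hom p F \<Longrightarrow> hom p (dx F)"
  unfolding hom_def dx_def by (auto simp: vderiv_zero)
lemma hom_dxpow: "hom p F \<Longrightarrow> hom p ((dx ^^ l) F)"
  by (induction l) (auto intro: hom_dx)
lemma hom_Dbar1: "hom p F \<Longrightarrow> hom (\<not> p) (Dbar1 F)"
  apply (elim homE)
  apply (simp_all add: hom_False hom_True Dbar1_def smul_def dxi1_def xi1_def dx_def vderiv_zero)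
  apply (simp_all add: fun_eq_iff)
  done
lemma hom_Dbar2: "hom p F \<Longrightarrow> hom (\<not> p) (Dbar2 F)"
  apply (elim homE)
  apply (simp_all add: hom_False hom_True Dbar2_def smul_def dxi2_def xi2_def dx_def vderiv_zero)
  apply (simp_all add: fun_eq_iff)
  done
lemma hom_monop: "hom p F \<Longrightarrow> hom (p \<noteq> (m \<noteq> n)) (monop l m n F)"
  unfolding monop_def
  apply (rule hom_dxpow)
  apply (cases m; cases n; simp)
  apply (auto dest: hom_Dbar1 hom_Dbar2 hom_Dbar1[OF hom_Dbar2])
  done

lemma evp_homF: "hom False F \<Longrightarrow> evp F = F"
  unfolding hom_def evp_def by (auto simp: fun_eq_iff)
lemma evp_homT: "hom True F \<Longrightarrow> evp F = 0"
  unfolding hom_def evp_def by (auto simp: fun_eq_iff)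
lemma odp_homT: "hom True F \<Longrightarrow> odp F = F"
  unfolding hom_def odp_def by (auto simp: fun_eq_iff)
lemma odp_homF: "hom False F \<Longrightarrow> odp F = 0"
  unfolding hom_def odp_def by (auto simp: fun_eq_iff)
lemma evp_add: "evp (F + G) = evp F + evp G"
  unfolding evp_def by (auto simp: fun_eq_iff)
lemma odp_add: "odp (F + G) = odp F + odp G"
  unfolding odp_def by (auto simp: fun_eq_iff)
lemma evp_zero: "evp 0 = 0" unfolding evp_def by (auto simp: fun_eq_iff)
lemma odp_zero: "odp 0 = 0" unfolding odp_def by (auto simp: fun_eq_iff)
lemma evp_sum: "evp (\<Sum>i\<in>S. F i) = (\<Sum>i\<in>S. evp (F i))"
  by (rule sum_additive[where T=evp]) (simp_all only: evp_add evp_zero)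
lemma odp_sum: "odp (\<Sum>i\<in>S. F i) = (\<Sum>i\<in>S. odp (F i))"
  by (rule sum_additive[where T=odp]) (simp_all only: odp_add odp_zero)
lemma evp_odp: "evp F + odp F = F"
  unfolding evp_def odp_def by (auto simp: fun_eq_iff)

lemma evp_smul_hom: "hom t X \<Longrightarrow> evp (smul a X) = smul (if t then odp a else evp a) X"
  apply (elim homE)
  apply (simp_all add: hom_False hom_True)
  apply (rule sfun_eqI; simp add: smul_def evp_def odp_def)+
  done
lemma odp_smul_hom: "hom t X \<Longrightarrow> odp (smul a X) = smul (if t then evp a else odp a) X"
  apply (elim homE)
  apply (simp_all add: hom_False hom_True)
  apply (rule sfun_eqI; simp add: smul_def evp_def odp_def)+
  done




subsection \<open>Differential layer\<close>

lemma dfbF: "F \<in> Cinf \<Longrightarrow> F m n differentiable (at x)"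
  using ok_dfb CinfD by blast

lemma vderiv_cmult: "(\<And>x. u differentiable (at x)) \<Longrightarrow> vderiv (\<lambda>x. c * u x) = (\<lambda>x. c * vderiv u x)"
  unfolding vderiv_def by (rule ext) (simp add: vector_derivative_at vector_derivative_works[symmetric]
      has_vector_derivative_mult_right)

lemma dx_add: "F \<in> Cinf \<Longrightarrow> G \<in> Cinf \<Longrightarrow> dx (F + G) = dx F + dx G"
  by (rule sfun_eqI) (simp_all add: dx_def plus_fun_def vderiv_add dfbF)
lemma dx_diff: "F \<in> Cinf \<Longrightarrow> G \<in> Cinf \<Longrightarrow> dx (F - G) = dx F - dx G"
  by (rule sfun_eqI) (simp_all add: dx_def fun_diff_def vderiv_diff dfbF)
lemma dx_sscale: "F \<in> Cinf \<Longrightarrow> dx (sscale c F) = sscale c (dx F)"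
  by (rule sfun_eqI) (simp_all add: dx_def sscale_def vderiv_cmult dfbF)
lemma dx_smul: "F \<in> Cinf \<Longrightarrow> G \<in> Cinf \<Longrightarrow> dx (smul F G) = smul (dx F) G + smul F (dx G)"
  by (rule sfun_eqI) (simp_all add: dx_def smul_def vderiv_add vderiv_diff vderiv_mult dfbF algebra_simps)
lemma dx_zero: "dx 0 = 0"
  by (rule sfun_eqI) (simp_all add: dx_def vderiv_zero)

lemma dx_sum: "finite S \<Longrightarrow> (\<And>i. i \<in> S \<Longrightarrow> F i \<in> Cinf) \<Longrightarrow> dx (\<Sum>i\<in>S. F i) = (\<Sum>i\<in>S. dx (F i))"
proof (induction S rule: finite_induct)
  case empty then show ?case by (simp only: sum.empty dx_zero)
next
  case (insert x S)
  have "dx (\<Sum>i\<in>insert x S. F i) = dx (F x + (\<Sum>i\<in>S. F i))" by (simp only: sum.insert[OF insert(1,2)])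
  also have "\<dots> = dx (F x) + dx (\<Sum>i\<in>S. F i)" using insert by (intro dx_add Cinf_sum) auto
  also have "\<dots> = (\<Sum>i\<in>insert x S. dx (F i))" using insert by (simp add: sum.insert[OF insert(1,2)])
  finally show ?case .
qed

lemma dxpow_add: "F \<in> Cinf \<Longrightarrow> G \<in> Cinf \<Longrightarrow> (dx ^^ l) (F + G) = (dx ^^ l) F + (dx ^^ l) G"
  by (induction l) (auto simp: dx_add Cinf_dxpow)
lemma dxpow_sscale: "F \<in> Cinf \<Longrightarrow> (dx ^^ l) (sscale c F) = sscale c ((dx ^^ l) F)"
  by (induction l) (auto simp: dx_sscale Cinf_dxpow)

lemma dxi1_add: "dxi1 (F + G) = dxi1 F + dxi1 G"
  by (rule sfun_eqI) (simp_all add: dxi1_def)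
lemma dxi2_add: "dxi2 (F + G) = dxi2 F + dxi2 G"
  by (rule sfun_eqI) (simp_all add: dxi2_def)
lemma dxi1_sscale: "dxi1 (sscale c F) = sscale c (dxi1 F)"
  by (rule sfun_eqI) (simp_all add: dxi1_def sscale_def)
lemma dxi2_sscale: "dxi2 (sscale c F) = sscale c (dxi2 F)"
  by (rule sfun_eqI) (simp_all add: dxi2_def sscale_def)

lemma Dbar1_add: "F \<in> Cinf \<Longrightarrow> G \<in> Cinf \<Longrightarrow> Dbar1 (F + G) = Dbar1 F + Dbar1 G"
  unfolding Dbar1_def by (simp add: dx_add dxi1_add smul_add_right algebra_simps)
lemma Dbar2_add: "F \<in> Cinf \<Longrightarrow> G \<in> Cinf \<Longrightarrow> Dbar2 (F + G) = Dbar2 F + Dbar2 G"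
  unfolding Dbar2_def by (simp add: dx_add dxi2_add smul_add_right algebra_simps)
lemma Dbar1_sscale: "F \<in> Cinf \<Longrightarrow> Dbar1 (sscale c F) = sscale c (Dbar1 F)"
  unfolding Dbar1_def by (simp add: dx_sscale dxi1_sscale smul_sscale_right sscale_diff)
lemma Dbar2_sscale: "F \<in> Cinf \<Longrightarrow> Dbar2 (sscale c F) = sscale c (Dbar2 F)"
  unfolding Dbar2_def by (simp add: dx_sscale dxi2_sscale smul_sscale_right sscale_diff)

lemma monop_add: "F \<in> Cinf \<Longrightarrow> G \<in> Cinf \<Longrightarrow> monop l m n (F + G) = monop l m n F + monop l m n G"
  unfolding monop_def
  by (cases m; cases n) (simp_all add: Dbar1_add Dbar2_add dxpow_add Cinf_Dbar1 Cinf_Dbar2 Cinf_add)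
lemma monop_sscale: "F \<in> Cinf \<Longrightarrow> monop l m n (sscale c F) = sscale c (monop l m n F)"
  unfolding monop_def
  by (cases m; cases n) (simp_all add: Dbar1_sscale Dbar2_sscale dxpow_sscale Cinf_Dbar1 Cinf_Dbar2 Cinf_sscale)

lemma monop_Suc: "monop (Suc l) m n F = dx (monop l m n F)"
  unfolding monop_def by simp
lemma monop0: "monop 0 False False F = F" "monop 0 True False F = Dbar1 F"
   "monop 0 False True F = Dbar2 F" "monop 0 True True F = Dbar1 (Dbar2 F)"
  unfolding monop_def by simp_all

lemma dxi1_smul: assumes "hom p F"
  shows "dxi1 (smul F G) = smul (dxi1 F) G + sscale (psign p) (smul F (dxi1 G))"
  using assms
  apply (elim homE)
  apply (rule sfun_eqI; simp add: smul_def sscale_def dxi1_def psign_def algebra_simps)+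
  done

lemma hom_xi1: "hom True xi1"
  unfolding hom_True xi1_def by (simp add: fun_eq_iff)

lemma Dbar1_smul: assumes "F \<in> Cinf" "G \<in> Cinf" "hom p F"
  shows "Dbar1 (smul F G) = smul (Dbar1 F) G + sscale (psign p) (smul F (Dbar1 G))"
proof -
  have e: "dx (smul F G) = smul (dx F) G + smul F (dx G)" using assms(1,2) by (rule dx_smul)
  have c: "smul xi1 (smul F (dx G)) = sscale (psign p) (smul F (smul xi1 (dx G)))"
    using supercomm[OF hom_xi1 assms(3)] by simp
  show ?thesis
    unfolding Dbar1_def e dxi1_smul[OF assms(3)] smul_add_right c
    unfolding smul_assoc[symmetric] smul_diff_left smul_diff_right sscale_diff
    by (simp add: algebra_simps)
qed

lemma dxi2_smul: assumes "hom p F"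
  shows "dxi2 (smul F G) = smul (dxi2 F) G + sscale (psign p) (smul F (dxi2 G))"
  using assms
  apply (elim homE)
  apply (rule sfun_eqI; simp add: smul_def sscale_def dxi2_def psign_def algebra_simps)+
  done

lemma hom_xi2: "hom True xi2"
  unfolding hom_True xi2_def by (simp add: fun_eq_iff)

lemma Dbar2_smul: assumes "F \<in> Cinf" "G \<in> Cinf" "hom p F"
  shows "Dbar2 (smul F G) = smul (Dbar2 F) G + sscale (psign p) (smul F (Dbar2 G))"
proof -
  have e: "dx (smul F G) = smul (dx F) G + smul F (dx G)" using assms(1,2) by (rule dx_smul)
  have c: "smul xi2 (smul F (dx G)) = sscale (psign p) (smul F (smul xi2 (dx G)))"
    using supercomm[OF hom_xi2 assms(3)] by simp
  show ?thesis
    unfolding Dbar2_def e dxi2_smul[OF assms(3)] smul_add_right c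
    unfolding smul_assoc[symmetric] smul_diff_left smul_diff_right sscale_diff
    by (simp add: algebra_simps)
qed

subsection \<open>Operator spaces\<close>

definition wt :: "nat \<times> bool \<times> bool \<Rightarrow> nat" where
  "wt i = (case i of (l, m, n) \<Rightarrow> 2 * l + of_bool m + of_bool n)"
definition mo :: "nat \<times> bool \<times> bool \<Rightarrow> sop" where
  "mo i = (case i of (l, m, n) \<Rightarrow> monop l m n)"
definition par :: "nat \<times> bool \<times> bool \<Rightarrow> bool" where
  "par i = (case i of (l, m, n) \<Rightarrow> m \<noteq> n)"
definition WS :: "nat \<Rightarrow> (nat \<times> bool \<times> bool) set" where
  "WS w = {i. wt i < w}"

lemma finite_WS: "finite (WS w)"
proof (rule finite_subset)
  show "WS w \<subseteq> {..<w} \<times> (UNIV :: (bool \<times> bool) set)"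
  proof
    fix i assume "i \<in> WS w"
    then show "i \<in> {..<w} \<times> (UNIV :: (bool \<times> bool) set)"
      by (cases i rule: prod_cases3) (auto simp: WS_def wt_def)
  qed
  show "finite ({..<w} \<times> (UNIV :: (bool \<times> bool) set))"
    by (intro finite_cartesian_product finite_lessThan finite_class.finite_UNIV)
qed

lemma Cinf_mo: "g \<in> Cinf \<Longrightarrow> mo i g \<in> Cinf"
  unfolding mo_def by (cases i rule: prod_cases3) (simp add: Cinf_monop)
lemma mo_add: "F \<in> Cinf \<Longrightarrow> G \<in> Cinf \<Longrightarrow> mo i (F + G) = mo i F + mo i G"
  unfolding mo_def by (cases i rule: prod_cases3) (simp add: monop_add)
lemma mo_sscale: "F \<in> Cinf \<Longrightarrow> mo i (sscale c F) = sscale c (mo i F)"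
  unfolding mo_def by (cases i rule: prod_cases3) (simp add: monop_sscale)
lemma hom_mo: assumes "hom p F" shows "hom (p \<noteq> par i) (mo i F)"
proof (cases i rule: prod_cases3)
  case (fields l m n) then show ?thesis using hom_monop[OF assms, of m n l] by (simp add: mo_def par_def)
qed

definition SL :: "nat \<Rightarrow> sop \<Rightarrow> bool" where
  "SL w X \<longleftrightarrow> (\<exists>a. (\<forall>i. a i \<in> Cinf) \<and> (\<forall>g\<in>Cinf. X g = (\<Sum>i\<in>WS w. smul (a i) (mo i g))))"

lemma SL_ext: assumes "SL w X" "\<And>g. g \<in> Cinf \<Longrightarrow> Y g = X g" shows "SL w Y"
proof -
  obtain a where a: "\<forall>i. a i \<in> Cinf" "\<forall>g\<in>Cinf. X g = (\<Sum>i\<in>WS w. smul (a i) (mo i g))"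
    using assms(1) unfolding SL_def by blast
  show ?thesis unfolding SL_def by (intro exI[of _ a]) (simp add: a assms(2))
qed

lemma SL_zero: "SL w (\<lambda>g. 0)"
  unfolding SL_def by (rule exI[of _ "\<lambda>i. 0"]) (simp add: Cinf_zero)

lemma SL_add: assumes "SL w X" "SL w Y" shows "SL w (\<lambda>g. X g + Y g)"
proof -
  obtain a where a: "\<forall>i. a i \<in> Cinf" "\<forall>g\<in>Cinf. X g = (\<Sum>i\<in>WS w. smul (a i) (mo i g))"
    using assms(1) unfolding SL_def by blast
  obtain b where b: "\<forall>i. b i \<in> Cinf" "\<forall>g\<in>Cinf. Y g = (\<Sum>i\<in>WS w. smul (b i) (mo i g))"
    using assms(2) unfolding SL_def by blast
  show ?thesis unfolding SL_def
    by (rule exI[of _ "\<lambda>i. a i + b i"]) (simp add: a b Cinf_add smul_add_left sum.distrib)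
qed

lemma SL_diff: assumes "SL w X" "SL w Y" shows "SL w (\<lambda>g. X g - Y g)"
proof -
  obtain a where a: "\<forall>i. a i \<in> Cinf" "\<forall>g\<in>Cinf. X g = (\<Sum>i\<in>WS w. smul (a i) (mo i g))"
    using assms(1) unfolding SL_def by blast
  obtain b where b: "\<forall>i. b i \<in> Cinf" "\<forall>g\<in>Cinf. Y g = (\<Sum>i\<in>WS w. smul (b i) (mo i g))"
    using assms(2) unfolding SL_def by blast
  show ?thesis unfolding SL_def
    by (rule exI[of _ "\<lambda>i. a i - b i"]) (simp add: a b Cinf_diff smul_diff_left sum_subtractf)
qed

lemma SL_scale: assumes "SL w X" shows "SL w (\<lambda>g. sscale c (X g))"
proof -
  obtain a where a: "\<forall>i. a i \<in> Cinf" "\<forall>g\<in>Cinf. X g = (\<Sum>i\<in>WS w. smul (a i) (mo i g))"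
    using assms(1) unfolding SL_def by blast
  show ?thesis unfolding SL_def
    by (rule exI[of _ "\<lambda>i. sscale c (a i)"]) (simp add: a Cinf_sscale smul_sscale_left sscale_sum)
qed

lemma SL_lmul: assumes "SL w X" "b \<in> Cinf" shows "SL w (\<lambda>g. smul b (X g))"
proof -
  obtain a where a: "\<forall>i. a i \<in> Cinf" "\<forall>g\<in>Cinf. X g = (\<Sum>i\<in>WS w. smul (a i) (mo i g))"
    using assms(1) unfolding SL_def by blast
  show ?thesis unfolding SL_def
    by (rule exI[of _ "\<lambda>i. smul b (a i)"]) (simp add: a assms(2) Cinf_smul smul_assoc smul_sum_right)
qed

lemma SL_mono: assumes "SL w X" "w \<le> w'" shows "SL w' X"
proof -
  obtain a where a: "\<forall>i. a i \<in> Cinf" "\<forall>g\<in>Cinf. X g = (\<Sum>i\<in>WS w. smul (a i) (mo i g))"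
    using assms(1) unfolding SL_def by blast
  have sub: "WS w \<subseteq> WS w'" using assms(2) unfolding WS_def by auto
  show ?thesis unfolding SL_def
  proof (intro exI[of _ "\<lambda>i. if i \<in> WS w then a i else 0"] conjI ballI allI)
    fix i show "(if i \<in> WS w then a i else 0) \<in> Cinf" using a(1) Cinf_zero by (simp add: a(1)[rule_format])
  next
    fix g assume g: "g \<in> Cinf"
    have "(\<Sum>i\<in>WS w'. smul (if i \<in> WS w then a i else 0) (mo i g))
        = (\<Sum>i\<in>WS w. smul (if i \<in> WS w then a i else 0) (mo i g))"
      by (rule sum.mono_neutral_right[OF finite_WS sub]) auto
    also have "\<dots> = (\<Sum>i\<in>WS w. smul (a i) (mo i g))" by (rule sum.cong) auto
    finally show "X g = (\<Sum>i\<in>WS w'. smul (if i \<in> WS w then a i else 0) (mo i g))"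
      using a g by simp
  qed
qed

lemma SL_mono1: assumes "wt i < w" "b \<in> Cinf" shows "SL w (\<lambda>g. smul b (mo i g))"
  unfolding SL_def
proof (intro exI[of _ "\<lambda>k. if k = i then b else 0"] conjI ballI allI)
  fix k show "(if k = i then b else 0) \<in> Cinf" using assms Cinf_zero by auto
next
  fix g assume g: "g \<in> Cinf"
  have "(\<Sum>k\<in>WS w. smul (if k = i then b else 0) (mo k g)) = (\<Sum>k\<in>WS w. if k = i then smul b (mo k g) else 0)"
    by (rule sum.cong) auto
  also have "\<dots> = smul b (mo i g)" using assms(1) finite_WS by (simp add: sum.delta WS_def)
  finally show "smul b (mo i g) = (\<Sum>k\<in>WS w. smul (if k = i then b else 0) (mo k g))" by simp
qed

lemma SL_sum: "finite K \<Longrightarrow> (\<And>k. k \<in> K \<Longrightarrow> SL w (X k)) \<Longrightarrow> SL w (\<lambda>g. \<Sum>k\<in>K. X k g)"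
proof (induction K rule: finite_induct)
  case empty show ?case by (rule SL_ext[OF SL_zero]) (simp only: sum.empty)
next
  case (insert x K)
  have "SL w (\<lambda>g. X x g + (\<Sum>k\<in>K. X k g))" using insert by (intro SL_add) auto
  then show ?case by (rule SL_ext) (simp only: sum.insert[OF insert(1,2)])
qed

definition sh :: "nat \<times> bool \<times> bool \<Rightarrow> nat \<times> bool \<times> bool" where
  "sh i = (case i of (l, m, n) \<Rightarrow> (Suc l, m, n))"

lemma wt_sh: "wt (sh i) = wt i + 2"
  unfolding wt_def sh_def by (cases i rule: prod_cases3) auto
lemma mo_sh: "mo (sh i) g = dx (mo i g)"
  unfolding mo_def sh_def by (cases i rule: prod_cases3) (simp add: monop_Suc)

lemma SL_dx: assumes "SL w X" shows "SL (w + 2) (\<lambda>g. dx (X g))"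
proof -
  obtain a where a: "\<forall>i. a i \<in> Cinf" "\<forall>g\<in>Cinf. X g = (\<Sum>i\<in>WS w. smul (a i) (mo i g))"
    using assms(1) unfolding SL_def by blast
  have "SL (w + 2) (\<lambda>g. \<Sum>i\<in>WS w. smul (dx (a i)) (mo i g) + smul (a i) (mo (sh i) g))"
  proof (rule SL_sum[OF finite_WS])
    fix i assume "i \<in> WS w"
    then have "wt i < w + 2" "wt (sh i) < w + 2" by (auto simp: WS_def wt_sh)
    then show "SL (w + 2) (\<lambda>g. smul (dx (a i)) (mo i g) + smul (a i) (mo (sh i) g))"
      by (intro SL_add SL_mono1 Cinf_dx a(1)[rule_format])
  qed
  then show ?thesis
  proof (rule SL_ext)
    fix g assume g: "g \<in> Cinf"
    have "dx (X g) = dx (\<Sum>i\<in>WS w. smul (a i) (mo i g))" using a g by simp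
    also have "\<dots> = (\<Sum>i\<in>WS w. dx (smul (a i) (mo i g)))"
      by (rule dx_sum[OF finite_WS]) (intro Cinf_smul Cinf_mo a(1)[rule_format] g)
    also have "\<dots> = (\<Sum>i\<in>WS w. smul (dx (a i)) (mo i g) + smul (a i) (mo (sh i) g))"
      using g by (intro sum.cong) (simp_all add: dx_smul Cinf_mo mo_sh a(1)[rule_format])
    finally show "dx (X g) = (\<Sum>i\<in>WS w. smul (dx (a i)) (mo i g) + smul (a i) (mo (sh i) g))" .
  qed
qed

subsection \<open>Commutator\<close>

lemma alg1: "X - sscale (psign p) (Y + sscale (psign p) X) = sscale (- psign p) Y"
  by (cases p; rule sfun_eqI; simp add: sscale_def psign_def)

lemma commFF: assumes h: "h \<in> Cinf" "hom p h"
  shows "SL (wt (0, False, False)) (\<lambda>g. smul h (monop 0 False False g) - sscale (psign (p \<and> False \<noteq> False)) (monop 0 False False (smul h g)))"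
proof (rule SL_ext[OF SL_zero])
  fix g :: sfun
  show "smul h (monop 0 False False g) - sscale (psign (p \<and> False \<noteq> False)) (monop 0 False False (smul h g)) = 0"
    by (simp add: monop0 psign_def)
qed

lemma commTF: assumes h: "h \<in> Cinf" "hom p h"
  shows "SL (wt (0, True, False)) (\<lambda>g. smul h (monop 0 True False g) - sscale (psign (p \<and> True \<noteq> False)) (monop 0 True False (smul h g)))"
proof -
  have wt: "wt (0, True, False) = 1" by (simp add: wt_def)
  have S: "SL 1 (\<lambda>g. smul (sscale (- psign p) (Dbar1 h)) (mo (0, False, False) g))"
    by (rule SL_mono1) (auto simp: wt_def h Cinf_sscale Cinf_Dbar1)
  show ?thesis unfolding wt
  proof (rule SL_ext[OF S])
    fix g assume g: "g \<in> Cinf"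
    have e: "Dbar1 (smul h g) = smul (Dbar1 h) g + sscale (psign p) (smul h (Dbar1 g))"
      by (rule Dbar1_smul[OF h(1) g h(2)])
    have "smul h (Dbar1 g) - sscale (psign p) (Dbar1 (smul h g)) = sscale (- psign p) (smul (Dbar1 h) g)"
      unfolding e by (rule alg1)
    then show "smul h (monop 0 True False g) - sscale (psign (p \<and> True \<noteq> False)) (monop 0 True False (smul h g))
       = smul (sscale (- psign p) (Dbar1 h)) (mo (0, False, False) g)"
      by (simp add: monop0 mo_def smul_sscale_left)
  qed
qed

lemma commFT: assumes h: "h \<in> Cinf" "hom p h"
  shows "SL (wt (0, False, True)) (\<lambda>g. smul h (monop 0 False True g) - sscale (psign (p \<and> False \<noteq> True)) (monop 0 False True (smul h g)))"
proof -
  have wt: "wt (0, False, True) = 1" by (simp add: wt_def)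
  have S: "SL 1 (\<lambda>g. smul (sscale (- psign p) (Dbar2 h)) (mo (0, False, False) g))"
    by (rule SL_mono1) (auto simp: wt_def h Cinf_sscale Cinf_Dbar2)
  show ?thesis unfolding wt
  proof (rule SL_ext[OF S])
    fix g assume g: "g \<in> Cinf"
    have e: "Dbar2 (smul h g) = smul (Dbar2 h) g + sscale (psign p) (smul h (Dbar2 g))"
      by (rule Dbar2_smul[OF h(1) g h(2)])
    have "smul h (Dbar2 g) - sscale (psign p) (Dbar2 (smul h g)) = sscale (- psign p) (smul (Dbar2 h) g)"
      unfolding e by (rule alg1)
    then show "smul h (monop 0 False True g) - sscale (psign (p \<and> False \<noteq> True)) (monop 0 False True (smul h g))
       = smul (sscale (- psign p) (Dbar2 h)) (mo (0, False, False) g)"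
      by (simp add: monop0 mo_def smul_sscale_left)
  qed
qed

lemma commTT: assumes h: "h \<in> Cinf" "hom p h"
  shows "SL (wt (0, True, True)) (\<lambda>g. smul h (monop 0 True True g) - sscale (psign (p \<and> True \<noteq> True)) (monop 0 True True (smul h g)))"
proof -
  have wt: "wt (0, True, True) = 2" by (simp add: wt_def)
  have S: "SL 2 (\<lambda>g. smul (sscale (- 1) (Dbar1 (Dbar2 h))) (mo (0, False, False) g)
     + smul (sscale (- psign (\<not> p)) (Dbar2 h)) (mo (0, True, False) g)
     + smul (sscale (- psign p) (Dbar1 h)) (mo (0, False, True) g))"
    by (intro SL_add SL_mono1) (auto simp: wt_def h Cinf_sscale Cinf_Dbar1 Cinf_Dbar2)
  show ?thesis unfolding wt
  proof (rule SL_ext[OF S])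
    fix g assume g: "g \<in> Cinf"
    have hD2: "hom (\<not> p) (Dbar2 h)" by (rule hom_Dbar2[OF h(2)])
    have e1: "Dbar2 (smul h g) = smul (Dbar2 h) g + sscale (psign p) (smul h (Dbar2 g))"
      by (rule Dbar2_smul[OF h(1) g h(2)])
    have e2: "Dbar1 (smul (Dbar2 h) g) = smul (Dbar1 (Dbar2 h)) g + sscale (psign (\<not> p)) (smul (Dbar2 h) (Dbar1 g))"
      by (rule Dbar1_smul[OF Cinf_Dbar2[OF h(1)] g hD2])
    have e3: "Dbar1 (smul h (Dbar2 g)) = smul (Dbar1 h) (Dbar2 g) + sscale (psign p) (smul h (Dbar1 (Dbar2 g)))"
      by (rule Dbar1_smul[OF h(1) Cinf_Dbar2[OF g] h(2)])
    have c1: "smul (Dbar2 h) g \<in> Cinf" "smul h (Dbar2 g) \<in> Cinf"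
      using h g by (simp_all add: Cinf_smul Cinf_Dbar2)
    have e4: "Dbar1 (Dbar2 (smul h g)) = smul (Dbar1 (Dbar2 h)) g + sscale (psign (\<not> p)) (smul (Dbar2 h) (Dbar1 g))
         + sscale (psign p) (smul (Dbar1 h) (Dbar2 g) + sscale (psign p) (smul h (Dbar1 (Dbar2 g))))"
      unfolding e1 Dbar1_add[OF c1(1) Cinf_sscale[OF c1(2)]] Dbar1_sscale[OF c1(2)] e2 e3 ..
    show "smul h (monop 0 True True g) - sscale (psign (p \<and> True \<noteq> True)) (monop 0 True True (smul h g)) =
        smul (sscale (- 1) (Dbar1 (Dbar2 h))) (mo (0, False, False) g)
     + smul (sscale (- psign (\<not> p)) (Dbar2 h)) (mo (0, True, False) g)
     + smul (sscale (- psign p) (Dbar1 h)) (mo (0, False, True) g)"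
      unfolding monop0 mo_def prod.case e4 smul_sscale_left
      by (cases p; rule sfun_eqI; simp add: sscale_def psign_def monop0)
  qed
qed

lemma comm0: assumes h: "h \<in> Cinf" "hom p h"
  shows "SL (wt (0, m, n)) (\<lambda>g. smul h (monop 0 m n g) - sscale (psign (p \<and> m \<noteq> n)) (monop 0 m n (smul h g)))"
  by (induct m; induct n) (rule commFF[OF h] commTF[OF h] commFT[OF h] commTT[OF h])+

lemma comm: assumes h: "h \<in> Cinf" "hom p h"
  shows "SL (wt (l, m, n)) (\<lambda>g. smul h (monop l m n g) - sscale (psign (p \<and> m \<noteq> n)) (monop l m n (smul h g)))"
proof (induction l)
  case 0 show ?case by (rule comm0[OF h])
next
  case (Suc l)
  let ?s = "psign (p \<and> m \<noteq> n)"
  have S: "SL (wt (l, m, n) + 2) (\<lambda>g. dx (smul h (monop l m n g) - sscale ?s (monop l m n (smul h g)))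
           - smul (dx h) (mo (l, m, n) g))"
    by (intro SL_diff SL_dx Suc SL_mono1) (auto simp: h Cinf_dx)
  have wt: "wt (Suc l, m, n) = wt (l, m, n) + 2" by (simp add: wt_def)
  show ?case unfolding wt
  proof (rule SL_ext[OF S])
    fix g assume g: "g \<in> Cinf"
    have c1: "monop l m n g \<in> Cinf" "monop l m n (smul h g) \<in> Cinf"
      using g h by (simp_all add: Cinf_monop Cinf_smul)
    have c2: "smul h (monop l m n g) \<in> Cinf" "sscale ?s (monop l m n (smul h g)) \<in> Cinf"
      using c1 h by (simp_all add: Cinf_smul Cinf_sscale)
    show "smul h (monop (Suc l) m n g) - sscale ?s (monop (Suc l) m n (smul h g)) =
          dx (smul h (monop l m n g) - sscale ?s (monop l m n (smul h g))) - smul (dx h) (mo (l, m, n) g)"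
      unfolding monop_Suc mo_def prod.case dx_diff[OF c2] dx_sscale[OF c1(2)] dx_smul[OF h(1) c1(1)]
      by (simp add: algebra_simps)
  qed
qed

lemma term_id: assumes "hom p h" "hom (q \<noteq> t) b"
  shows "smul h (smul b X) - sscale (psign (p \<and> q)) (smul b Y)
       = sscale (psign (p \<and> (q \<noteq> t))) (smul b (smul h X - sscale (psign (p \<and> t)) Y))"
  unfolding supercomm[OF assms] smul_diff_right smul_sscale_right sscale_diff sscale_sscale
  by (cases p; cases q; cases t; simp add: psign_def)

lemma comm_B: assumes B: "\<forall>g\<in>Cinf. B g = (\<Sum>i\<in>WS (Suc j). smul (b i) (mo i g))"
  and b: "\<forall>i. b i \<in> Cinf" "\<forall>i. hom (q \<noteq> par i) (b i)" and h: "h \<in> Cinf" "hom p h"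
  shows "SL j (\<lambda>g. smul h (B g) - sscale (psign (p \<and> q)) (B (smul h g)))"
proof -
  have K: "SL j (\<lambda>g. smul h (mo i g) - sscale (psign (p \<and> par i)) (mo i (smul h g)))" if "i \<in> WS (Suc j)" for i
  proof -
    obtain l m n where i: "i = (l, m, n)" by (cases i rule: prod_cases3)
    have "wt i \<le> j" using that by (simp add: WS_def)
    then show ?thesis using SL_mono[OF comm[OF h, of l m n]] unfolding i by (simp add: mo_def par_def)
  qed
  have "SL j (\<lambda>g. \<Sum>i\<in>WS (Suc j). sscale (psign (p \<and> (q \<noteq> par i)))
           (smul (b i) (smul h (mo i g) - sscale (psign (p \<and> par i)) (mo i (smul h g)))))"
    using b K by (intro SL_sum[OF finite_WS] SL_scale SL_lmul) auto
  then show ?thesis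
  proof (rule SL_ext)
    fix g assume g: "g \<in> Cinf"
    have "smul h (B g) - sscale (psign (p \<and> q)) (B (smul h g))
       = (\<Sum>i\<in>WS (Suc j). smul h (smul (b i) (mo i g)) - sscale (psign (p \<and> q)) (smul (b i) (mo i (smul h g))))"
      using B g h by (simp add: Cinf_smul smul_sum_right sscale_sum sum_subtractf)
    also have "\<dots> = (\<Sum>i\<in>WS (Suc j). sscale (psign (p \<and> (q \<noteq> par i)))
           (smul (b i) (smul h (mo i g) - sscale (psign (p \<and> par i)) (mo i (smul h g)))))"
      using b h by (intro sum.cong refl term_id) auto
    finally show "smul h (B g) - sscale (psign (p \<and> q)) (B (smul h g)) = (\<Sum>i\<in>WS (Suc j). sscale (psign (p \<and> (q \<noteq> par i)))
           (smul (b i) (smul h (mo i g) - sscale (psign (p \<and> par i)) (mo i (smul h g)))))" .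
  qed
qed


subsection \<open>Parity decomposition of operators\<close>

lemma opev_rep:
  assumes A: "\<forall>g\<in>Cinf. A g = (\<Sum>i\<in>S. smul (a i) (mo i g))"
  shows "\<forall>g\<in>Cinf. op_ev A g = (\<Sum>i\<in>S. smul (if par i then odp (a i) else evp (a i)) (mo i g))"
    and "\<forall>g\<in>Cinf. op_od A g = (\<Sum>i\<in>S. smul (if par i then evp (a i) else odp (a i)) (mo i g))"
proof -
  define pe where "pe = (\<lambda>i. if par i then odp (a i) else evp (a i))"
  define po where "po = (\<lambda>i. if par i then evp (a i) else odp (a i))"
  { fix g assume g: "g \<in> Cinf"
    have ge: "evp g \<in> Cinf" and go: "odp g \<in> Cinf" using g by (simp_all add: Cinf_evp Cinf_odp)
    have he: "hom (par i) (mo i (evp g))" for i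
    proof -
      have "hom (False \<noteq> par i) (mo i (evp g))" by (rule hom_mo[OF hom_evp])
      then show ?thesis by simp
    qed
    have ho: "hom (\<not> par i) (mo i (odp g))" for i
    proof -
      have "hom (True \<noteq> par i) (mo i (odp g))" by (rule hom_mo[OF hom_odp])
      then show ?thesis by simp
    qed
    have E1: "evp (smul (a i) (mo i (evp g))) = smul (pe i) (mo i (evp g))" for i
      unfolding pe_def by (rule evp_smul_hom[OF he])
    have E2: "odp (smul (a i) (mo i (odp g))) = smul (pe i) (mo i (odp g))" for i
      unfolding pe_def odp_smul_hom[OF ho] by (cases "par i") simp_all
    have E3: "odp (smul (a i) (mo i (evp g))) = smul (po i) (mo i (evp g))" for i
      unfolding po_def by (rule odp_smul_hom[OF he])
    have E4: "evp (smul (a i) (mo i (odp g))) = smul (po i) (mo i (odp g))" for i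
      unfolding po_def evp_smul_hom[OF ho] by (cases "par i") simp_all
    have sp: "smul b (mo i (evp g)) + smul b (mo i (odp g)) = smul b (mo i g)" for i b
      unfolding smul_add_right[symmetric] mo_add[OF ge go, symmetric] evp_odp ..
    have Ae: "A (evp g) = (\<Sum>i\<in>S. smul (a i) (mo i (evp g)))" using A ge by blast
    have Ao: "A (odp g) = (\<Sum>i\<in>S. smul (a i) (mo i (odp g)))" using A go by blast
    have "op_ev A g = evp (A (evp g)) + odp (A (odp g))"
      unfolding op_ev_def restr_def by (simp only: if_P[OF g])
    also have "\<dots> = (\<Sum>i\<in>S. smul (pe i) (mo i (evp g))) + (\<Sum>i\<in>S. smul (pe i) (mo i (odp g)))"
      unfolding Ae Ao evp_sum odp_sum E1 E2 ..
    also have "\<dots> = (\<Sum>i\<in>S. smul (pe i) (mo i g))"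
      unfolding sum.distrib[symmetric] sp ..
    finally have r1: "op_ev A g = (\<Sum>i\<in>S. smul (pe i) (mo i g))" .
    have "op_od A g = odp (A (evp g)) + evp (A (odp g))"
      unfolding op_od_def restr_def by (simp only: if_P[OF g])
    also have "\<dots> = (\<Sum>i\<in>S. smul (po i) (mo i (evp g))) + (\<Sum>i\<in>S. smul (po i) (mo i (odp g)))"
      unfolding Ae Ao evp_sum odp_sum E3 E4 ..
    also have "\<dots> = (\<Sum>i\<in>S. smul (po i) (mo i g))"
      unfolding sum.distrib[symmetric] sp ..
    finally have r2: "op_od A g = (\<Sum>i\<in>S. smul (po i) (mo i g))" .
    note r1 r2 }
  then show "\<forall>g\<in>Cinf. op_ev A g = (\<Sum>i\<in>S. smul (if par i then odp (a i) else evp (a i)) (mo i g))"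
    and "\<forall>g\<in>Cinf. op_od A g = (\<Sum>i\<in>S. smul (if par i then evp (a i) else odp (a i)) (mo i g))"
    unfolding pe_def po_def by blast+
qed

lemma rep_lin:
  assumes B: "\<forall>g\<in>Cinf. B g = (\<Sum>i\<in>S. smul (b i) (mo i g))" and x: "x \<in> Cinf" and y: "y \<in> Cinf"
  shows "B (x + sscale c y) = B x + sscale c (B y)"
proof -
  have xy: "x + sscale c y \<in> Cinf" using x y by (simp add: Cinf_add Cinf_sscale)
  show ?thesis using B x y xy
    by (simp add: mo_add mo_sscale Cinf_sscale smul_add_right smul_sscale_right sum.distrib sscale_sum)
qed

lemma Lact_h_diff:
  assumes lin: "\<And>x y c. x \<in> Cinf \<Longrightarrow> y \<in> Cinf \<Longrightarrow> B (x + sscale c y) = B x + sscale c (B y)"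
    and f: "f \<in> Cinf" and g: "g \<in> Cinf" and eq: "mu - lam = mu' - lam'"
  shows "Lact_h lam mu f p B q g - Lact_h lam' mu' f p B q g
       = sscale (mu - mu') (smul (dx f) (B g) - sscale (psign (p \<and> q)) (B (smul (dx f) g)))"
proof -
  have c: "Xh f p g \<in> Cinf" "smul (dx f) g \<in> Cinf" using f g by (simp_all add: Cinf_Xh Cinf_smul Cinf_dx)
  have b: "B (Lh l f p g) = B (Xh f p g) + sscale l (B (smul (dx f) g))" for l
    unfolding Lh_def by (rule lin[OF c])
  have mu': "mu' = mu - lam + lam'" using eq by (simp add: algebra_simps)
  show ?thesis
    unfolding Lact_h_def restr_def using g
    apply (simp add: b)
    apply (simp only: Lh_def mu')
    apply (rule sfun_eqI; simp add: sscale_def algebra_simps)+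
    done
qed

lemma Dord_rep: assumes "A \<in> Dord j"
  shows "\<exists>a. (\<forall>i. a i \<in> Cinf) \<and> (\<forall>g\<in>Cinf. A g = (\<Sum>i\<in>WS (Suc j). smul (a i) (mo i g)))"
proof -
  obtain a where a: "\<forall>l m n. a l m n \<in> Cinf" and A: "A = restr (\<lambda>g. \<Sum>(l, m, n) \<in> {(l, m, n). 2 * l + of_bool m + of_bool n \<le> j}.
                        smul (a l m n) (monop l m n g))"
    using assms unfolding Dord_def by blast
  have S: "{(l, m, n). 2 * l + of_bool m + of_bool n \<le> j} = WS (Suc j)"
  proof (rule set_eqI)
    fix i show "i \<in> {(l, m, n). 2 * l + of_bool m + of_bool n \<le> j} \<longleftrightarrow> i \<in> WS (Suc j)"
      by (cases i rule: prod_cases3) (auto simp: WS_def wt_def)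
  qed
  show ?thesis
  proof (intro exI[of _ "\<lambda>i. case i of (l, m, n) \<Rightarrow> a l m n"] conjI allI ballI)
    fix i show "(case i of (l, m, n) \<Rightarrow> a l m n) \<in> Cinf"
      using a by (cases i rule: prod_cases3) simp
  next
    fix g assume g: "g \<in> Cinf"
    have "A g = (\<Sum>(l, m, n) \<in> WS (Suc j). smul (a l m n) (monop l m n g))"
      unfolding A restr_def S by (simp only: if_P[OF g])
    also have "\<dots> = (\<Sum>i\<in>WS (Suc j). smul (case i of (l, m, n) \<Rightarrow> a l m n) (mo i g))"
    proof (rule sum.cong[OF refl])
      fix i show "(case i of (l, m, n) \<Rightarrow> smul (a l m n) (monop l m n g)) = smul (case i of (l, m, n) \<Rightarrow> a l m n) (mo i g)"
        by (cases i rule: prod_cases3) (simp add: mo_def)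
    qed
    finally show "A g = (\<Sum>i\<in>WS (Suc j). smul (case i of (l, m, n) \<Rightarrow> a l m n) (mo i g))" .
  qed
qed

lemma SL_Dlow: assumes "SL w X" shows "restr X \<in> Dlow w"
proof -
  obtain a where a: "\<forall>i. a i \<in> Cinf" and X: "\<forall>g\<in>Cinf. X g = (\<Sum>i\<in>WS w. smul (a i) (mo i g))"
    using assms unfolding SL_def by blast
  show ?thesis
  proof (cases "w = 0")
    case True
    then have E: "WS w = {}" by (simp add: WS_def)
    have "restr X = 0"
    proof (rule ext)
      fix g show "restr X g = 0 g"
        using X E by (cases "g \<in> Cinf") (simp_all add: restr_def)
    qed
    then show ?thesis using True by (simp add: Dlow_def)
  next
    case False
    have S: "{(l, m, n). 2 * l + of_bool m + of_bool n \<le> w - 1} = WS w"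
    proof (rule set_eqI)
      fix i show "i \<in> {(l, m, n). 2 * l + of_bool m + of_bool n \<le> w - 1} \<longleftrightarrow> i \<in> WS w"
        using False by (cases i rule: prod_cases3) (auto simp: WS_def wt_def)
    qed
    have "restr X \<in> Dord (w - 1)"
      unfolding Dord_def
    proof (intro CollectI exI[of _ "\<lambda>l m n. a (l, m, n)"] conjI allI)
      fix l m n show "a (l, m, n) \<in> Cinf" using a by blast
    next
      show "restr X = restr (\<lambda>g. \<Sum>(l, m, n)\<in>{(l, m, n). 2 * l + of_bool m + of_bool n \<le> w - 1}.
                 smul (a (l, m, n)) (monop l m n g))"
      proof (rule ext)
        fix g
        show "restr X g = restr (\<lambda>g. \<Sum>(l, m, n)\<in>{(l, m, n). 2 * l + of_bool m + of_bool n \<le> w - 1}.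
                 smul (a (l, m, n)) (monop l m n g)) g"
        proof (cases "g \<in> Cinf")
          case True
          have "(\<Sum>(l, m, n)\<in>WS w. smul (a (l, m, n)) (monop l m n g)) = (\<Sum>i\<in>WS w. smul (a i) (mo i g))"
          proof (rule sum.cong[OF refl])
            fix i show "(case i of (l, m, n) \<Rightarrow> smul (a (l, m, n)) (monop l m n g)) = smul (a i) (mo i g)"
              by (cases i rule: prod_cases3) (simp add: mo_def)
          qed
          then show ?thesis unfolding restr_def S using True X by simp
        next
          case False then show ?thesis unfolding restr_def by simp
        qed
      qed
    qed
    then show ?thesis using False by (simp add: Dlow_def)
  qed
qed

lemma four_diff: "((a1::sfun) + a2 + a3 + a4) - (b1 + b2 + b3 + b4) = (a1 - b1) + (a2 - b2) + (a3 - b3) + (a4 - b4)"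
  by (simp add: algebra_simps)

lemma main_diff:
  assumes A: "A \<in> Dord j" and f: "f \<in> Cinf" and eq: "mu - lam = mu' - lam'"
  shows "Lact lam mu f A - Lact lam' mu' f A \<in> Dlow j"
proof -
  obtain a where a: "\<forall>i. a i \<in> Cinf" and rep: "\<forall>g\<in>Cinf. A g = (\<Sum>i\<in>WS (Suc j). smul (a i) (mo i g))"
    using Dord_rep[OF A] by blast
  define pe where "pe = (\<lambda>i. if par i then odp (a i) else evp (a i))"
  define po where "po = (\<lambda>i. if par i then evp (a i) else odp (a i))"
  have r0: "\<forall>g\<in>Cinf. op_ev A g = (\<Sum>i\<in>WS (Suc j). smul (pe i) (mo i g))"
    using opev_rep(1)[OF rep] unfolding pe_def by simp
  have r1: "\<forall>g\<in>Cinf. op_od A g = (\<Sum>i\<in>WS (Suc j). smul (po i) (mo i g))"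
    using opev_rep(2)[OF rep] unfolding po_def by simp
  have cpe: "\<forall>i. pe i \<in> Cinf" "\<forall>i. po i \<in> Cinf"
    using a by (simp_all add: pe_def po_def Cinf_evp Cinf_odp a(1)[rule_format])
  have hpe: "\<forall>i. hom (False \<noteq> par i) (pe i)" by (simp add: pe_def hom_evp hom_odp)
  have hpo: "\<forall>i. hom (True \<noteq> par i) (po i)" by (simp add: po_def hom_evp hom_odp)
  define h0 where "h0 = dx (evp f)"
  define h1 where "h1 = dx (odp f)"
  have ch: "h0 \<in> Cinf" "h1 \<in> Cinf" using f by (simp_all add: h0_def h1_def Cinf_dx Cinf_evp Cinf_odp)
  have hh: "hom False h0" "hom True h1" by (simp_all add: h0_def h1_def hom_dx hom_evp hom_odp)
  define X where "X = (\<lambda>g. sscale (mu - mu') (smul h0 (op_ev A g) - sscale (psign (False \<and> False)) (op_ev A (smul h0 g)))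
      + sscale (mu - mu') (smul h0 (op_od A g) - sscale (psign (False \<and> True)) (op_od A (smul h0 g)))
      + sscale (mu - mu') (smul h1 (op_ev A g) - sscale (psign (True \<and> False)) (op_ev A (smul h1 g)))
      + sscale (mu - mu') (smul h1 (op_od A g) - sscale (psign (True \<and> True)) (op_od A (smul h1 g))))"
  have "SL j X"
    unfolding X_def
    by (intro SL_add SL_scale comm_B[OF r0 cpe(1) hpe] comm_B[OF r1 cpe(2) hpo] ch hh)
  then have D: "restr X \<in> Dlow j" by (rule SL_Dlow)
  have lin0: "\<And>x y c. x \<in> Cinf \<Longrightarrow> y \<in> Cinf \<Longrightarrow> op_ev A (x + sscale c y) = op_ev A x + sscale c (op_ev A y)"
    by (rule rep_lin[OF r0])
  have lin1: "\<And>x y c. x \<in> Cinf \<Longrightarrow> y \<in> Cinf \<Longrightarrow> op_od A (x + sscale c y) = op_od A x + sscale c (op_od A y)"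
    by (rule rep_lin[OF r1])
  have fe: "evp f \<in> Cinf" "odp f \<in> Cinf" using f by (simp_all add: Cinf_evp Cinf_odp)
  have "Lact lam mu f A - Lact lam' mu' f A = restr X"
  proof (rule ext)
    fix g
    show "(Lact lam mu f A - Lact lam' mu' f A) g = restr X g"
    proof (cases "g \<in> Cinf")
      case True
      have "(Lact lam mu f A - Lact lam' mu' f A) g =
          (Lact_h lam mu (evp f) False (op_ev A) False g - Lact_h lam' mu' (evp f) False (op_ev A) False g)
        + (Lact_h lam mu (evp f) False (op_od A) True g - Lact_h lam' mu' (evp f) False (op_od A) True g)
        + (Lact_h lam mu (odp f) True (op_ev A) False g - Lact_h lam' mu' (odp f) True (op_ev A) False g)
        + (Lact_h lam mu (odp f) True (op_od A) True g - Lact_h lam' mu' (odp f) True (op_od A) True g)"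
        unfolding Lact_def by (simp add: fun_eq_iff algebra_simps)
      also have "\<dots> = X g"
      proof -
        have d1: "Lact_h lam mu (evp f) False (op_ev A) False g - Lact_h lam' mu' (evp f) False (op_ev A) False g
          = sscale (mu - mu') (smul (dx (evp f)) (op_ev A g) - sscale (psign (False \<and> False)) (op_ev A (smul (dx (evp f)) g)))"
          by (rule Lact_h_diff[OF lin0 fe(1) True eq])
        have d2: "Lact_h lam mu (evp f) False (op_od A) True g - Lact_h lam' mu' (evp f) False (op_od A) True g
          = sscale (mu - mu') (smul (dx (evp f)) (op_od A g) - sscale (psign (False \<and> True)) (op_od A (smul (dx (evp f)) g)))"
          by (rule Lact_h_diff[OF lin1 fe(1) True eq])
        have d3: "Lact_h lam mu (odp f) True (op_ev A) False g - Lact_h lam' mu' (odp f) True (op_ev A) False g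
          = sscale (mu - mu') (smul (dx (odp f)) (op_ev A g) - sscale (psign (True \<and> False)) (op_ev A (smul (dx (odp f)) g)))"
          by (rule Lact_h_diff[OF lin0 fe(2) True eq])
        have d4: "Lact_h lam mu (odp f) True (op_od A) True g - Lact_h lam' mu' (odp f) True (op_od A) True g
          = sscale (mu - mu') (smul (dx (odp f)) (op_od A g) - sscale (psign (True \<and> True)) (op_od A (smul (dx (odp f)) g)))"
          by (rule Lact_h_diff[OF lin1 fe(2) True eq])
        show ?thesis unfolding X_def h0_def h1_def d1 d2 d3 d4 ..
      qed
      also have "\<dots> = restr X g" using True by (simp add: restr_def)
      finally show ?thesis .
    next
      case False
      then show ?thesis by (simp add: Lact_def Lact_h_def restr_def)
    qed
  qed
  then show ?thesis using D by simp
qed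

lemma zero_Dlow: "0 \<in> Dlow j"
proof -
  have "restr (\<lambda>g. 0) \<in> Dlow j" by (rule SL_Dlow[OF SL_zero])
  moreover have "restr (\<lambda>g. 0) = 0" by (rule ext) (simp add: restr_def)
  ultimately show ?thesis by simp
qed

lemma grel_refl: "grel Q Q"
  unfolding grel_def by (simp add: zero_Dlow)

theorem corollary3p7:
  fixes lam mu lam' mu' :: complex
  assumes "mu - lam = mu' - lam'"
  shows "gr_iso lam mu lam' mu'"
  unfolding gr_iso_def
proof (rule exI[of _ "\<lambda>Q. Q"], intro conjI ballI allI)
  fix f Q assume f: "f \<in> Cinf" and Q: "Q \<in> GR"
  show "grel (gr_act lam mu f Q) (gr_act lam' mu' f Q)"
    unfolding grel_def gr_act_def
  proof
    fix j
    have "Q j \<in> Dord j" using Q by (simp add: GR_def)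
    then show "Lact lam mu f (Q j) - Lact lam' mu' f (Q j) \<in> Dlow j"
      using main_diff f assms by blast
  qed
next
  fix R assume "R \<in> GR"
  then show "\<exists>Q\<in>GR. grel ((\<lambda>Q. Q) Q) R" using grel_refl by blast
qed (auto simp: grel_refl)


end
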